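(* Let $x \in \mathbb{R}^n$ be deterministic, $y\in\mathbb{R}^n$ deterministic, and $f:\mathbb{R}^n\to\mathbb{R}^n$. Let $\tilde a,\tilde b,\tilde c$ be random vectors in $\mathbb{R}^n$ such that all $3n$ entries are mutually independent, $\mathbb{E}[\tilde a_i] = \mathbb{E}[\tilde b_i] = \mathbb{E}[\tilde c_i] = x_i$ for all $i$, and for each $i$ the variables $\tilde a_i,\tilde b_i,\tilde c_i$ have common $k$-th central moments $\mu_i^{[k]}$ for $k\le 4$. Let $\gamma := \max_{1\le i\le n}|x_i - f(y)_i|$ and suppose there is a constant $\alpha$ with $\max_{1\le i\le n}\max\{\mu_i^{[4]}, \mu_i^{[3]}\gamma, \gamma^4\}\le\alpha$. Let $\widetilde{\mathrm{uSE}}_i := (\tilde a_i - f(y)_i)^2 - \frac{(\tilde b_i - \tilde c_i)^2}{2}$. Then $\mathrm{Var}[\widetilde{\mathrm{uSE}}_i] \le 14\alpha$ for every $1\le i\le n$. *)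

theory Defs
  imports "HOL-Probability.Probability"
begin

text \<open>Labels for the three random vectors a, b, c, used to index the
  family of all 3n scalar entries.\<close>
datatype vlabel = LA | LB | LC

definition entry_family ::
  "('w \<Rightarrow> real^'n) \<Rightarrow> ('w \<Rightarrow> real^'n) \<Rightarrow> ('w \<Rightarrow> real^'n)
     \<Rightarrow> vlabel \<times> 'n \<Rightarrow> 'w \<Rightarrow> real" where
  "entry_family a b c = (\<lambda>(l, i) \<omega>. (case l of LA \<Rightarrow> a \<omega> | LB \<Rightarrow> b \<omega> | LC \<Rightarrow> c \<omega>) $ i)"

end

theory Submission
  imports Defs
begin

lemma pw_bound:
  fixes t u :: real assumes "k \<le> 4"
  shows "\<bar>(t - u) ^ k\<bar> \<le> 1 + 8 * t ^ 4 + 8 * u ^ 4"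
proof -
  have a: "\<bar>s ^ k\<bar> \<le> 1 + s ^ 4" for s :: real
  proof (cases "\<bar>s\<bar> \<le> 1")
    case True
    then have "\<bar>s\<bar> ^ k \<le> 1" by (simp add: power_le_one)
    have "(0::real) \<le> s^4" by (simp add: zero_le_even_power)
    then show ?thesis using \<open>\<bar>s\<bar> ^ k \<le> 1\<close> power_abs[of s k] by linarith
  next
    case False
    then have "\<bar>s\<bar> ^ k \<le> \<bar>s\<bar> ^ 4" using assms by (intro power_increasing) auto
    then show ?thesis by (simp add: power_abs power_even_abs_numeral)
  qed
  have b: "(t - u) ^ 4 \<le> 8 * t ^ 4 + 8 * u ^ 4"
  proof -
    have "(t-u)^2 \<le> 2*t^2 + 2*u^2" by (smt (verit) sum_squares_ge_zero power2_diff power2_sum zero_le_power2)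
    then have "((t-u)^2)^2 \<le> (2*t^2 + 2*u^2)^2" by (intro power_mono) auto
    also have "\<dots> \<le> 8 * t ^ 4 + 8 * u ^ 4"
      using zero_le_power2[of "t^2 - u^2"] by (simp add: power2_eq_square algebra_simps power4_eq_xxxx)
    finally show ?thesis by (simp add: power_mult[symmetric])
  qed
  show ?thesis using a[of "t-u"] b by linarith
qed


lemma intpow:
  fixes X :: "'w \<Rightarrow> real"
  assumes P: "prob_space M" and X: "X \<in> borel_measurable M"
    and I: "integrable M (\<lambda>\<omega>. (X \<omega>) ^ 4)" and k: "k \<le> 4"
  shows "integrable M (\<lambda>\<omega>. (X \<omega> - u) ^ k)"
proof -
  interpret prob_space M by (rule P)
  have "integrable M (\<lambda>\<omega>. 1 + 8 * (X \<omega>) ^ 4 + 8 * u ^ 4)"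
    using I by auto
  then show ?thesis
    by (rule Bochner_Integration.integrable_bound)
       (use X pw_bound[OF k] in auto)
qed

lemma idV:
  fixes A B C d :: real
  shows "A^4*B^0*C^0 + 4*d*(A^3*B^0*C^0) + 4*d^2*(A^2*B^0*C^0)
      - A^2*B^2*C^0 + 2*(A^2*B^1*C^1) - A^2*B^0*C^2 - 2*d*(A^1*B^2*C^0) + 4*d*(A^1*B^1*C^1)
      - 2*d*(A^1*B^0*C^2) + 1/4*(A^0*B^4*C^0) + 1/4*(A^0*B^0*C^4) + 3/2*(A^0*B^2*C^2)
      - A^0*B^3*C^1 - A^0*B^1*C^3 = ((A + d)^2 - (B - C)^2/2 - d^2)^2"
  by (simp add: power2_eq_square power3_eq_cube power4_eq_xxxx field_simps)

lemma id1:
  fixes A B C d :: real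
  shows "A^4*B^0*C^0 - 4*d*(A^3*B^0*C^0) + 4*d^2*(A^2*B^0*C^0) = (A^2*B^0*C^0 - 2 * d * (A^1*B^0*C^0))^2"
  by (simp add: power2_eq_square power3_eq_cube power4_eq_xxxx field_simps)

lemma id2:
  fixes A B C d :: real
  shows "A^4*B^0*C^0 - 2*d^2*(A^2*B^0*C^0) + d^4*(A^0*B^0*C^0) = (A^2*B^0*C^0 - d^2)^2"
  by (simp add: power2_eq_square power3_eq_cube power4_eq_xxxx field_simps)

lemma M3:
  fixes X :: "vlabel \<times> 'n \<Rightarrow> 'w \<Rightarrow> real"
  assumes P: "prob_space M" and ind: "prob_space.indep_vars M (\<lambda>_. borel) X UNIV"
    and ia: "integrable M (\<lambda>\<omega>. (X (LA,i) \<omega> - u) ^ p)"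
    and ib: "integrable M (\<lambda>\<omega>. (X (LB,i) \<omega> - u) ^ q)"
    and ic: "integrable M (\<lambda>\<omega>. (X (LC,i) \<omega> - u) ^ r)"
  shows "has_bochner_integral M
     (\<lambda>\<omega>. (X (LA,i) \<omega> - u) ^ p * (X (LB,i) \<omega> - u) ^ q * (X (LC,i) \<omega> - u) ^ r)
     (integral\<^sup>L M (\<lambda>\<omega>. (X (LA,i) \<omega> - u) ^ p) * integral\<^sup>L M (\<lambda>\<omega>. (X (LB,i) \<omega> - u) ^ q)
       * integral\<^sup>L M (\<lambda>\<omega>. (X (LC,i) \<omega> - u) ^ r))"
proof -
  interpret prob_space M by (rule P)
  define e where "e j = (case fst j of LA \<Rightarrow> p | LB \<Rightarrow> q | LC \<Rightarrow> r)" for j :: "vlabel \<times> 'n"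
  define I where "I = {(LA,i),(LB,i),(LC,i)}"
  have ind2: "indep_vars (\<lambda>_. borel) (\<lambda>j \<omega>. (\<lambda>t. (t - u) ^ e j) (X j \<omega>)) I"
    by (rule indep_vars_compose2[OF indep_vars_subset[OF ind]]) (auto simp: I_def)
  have fin: "finite I" by (simp add: I_def)
  have ints: "\<And>j. j \<in> I \<Longrightarrow> integrable M (\<lambda>\<omega>. (X j \<omega> - u) ^ e j)"
    using ia ib ic by (auto simp: I_def e_def)
  note r1 = indep_vars_lebesgue_integral[OF fin ind2 ints]
  note r2 = indep_vars_integrable[OF fin ind2 ints]
  have pe: "(\<Prod>j\<in>I. (X j \<omega> - u) ^ e j) = (X (LA,i) \<omega> - u) ^ p * (X (LB,i) \<omega> - u) ^ q * (X (LC,i) \<omega> - u) ^ r" for \<omega>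
    by (simp add: I_def e_def)
  have pe2: "(\<Prod>j\<in>I. integral\<^sup>L M (\<lambda>\<omega>. (X j \<omega> - u) ^ e j)) = integral\<^sup>L M (\<lambda>\<omega>. (X (LA,i) \<omega> - u) ^ p) * integral\<^sup>L M (\<lambda>\<omega>. (X (LB,i) \<omega> - u) ^ q)
       * integral\<^sup>L M (\<lambda>\<omega>. (X (LC,i) \<omega> - u) ^ r)"
    by (simp add: I_def e_def)
  show ?thesis using r1 r2 unfolding has_bochner_integral_iff pe pe2 by simp
qed

theorem lemmaE2:
  fixes M :: "'w measure"
    and x y :: "real^'n"
    and f :: "real^'n \<Rightarrow> real^'n"
    and a b c :: "'w \<Rightarrow> real^'n"
    and \<mu> :: "'n \<Rightarrow> nat \<Rightarrow> real"
    and \<gamma> \<alpha> :: real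
  assumes "prob_space M"
    and indep: "prob_space.indep_vars M (\<lambda>_. borel) (entry_family a b c) UNIV"
    and int_a: "\<And>i. integrable M (\<lambda>\<omega>. (a \<omega> $ i) ^ 4)"
    and int_b: "\<And>i. integrable M (\<lambda>\<omega>. (b \<omega> $ i) ^ 4)"
    and int_c: "\<And>i. integrable M (\<lambda>\<omega>. (c \<omega> $ i) ^ 4)"
    and mean_a: "\<And>i. prob_space.expectation M (\<lambda>\<omega>. a \<omega> $ i) = x $ i"
    and mean_b: "\<And>i. prob_space.expectation M (\<lambda>\<omega>. b \<omega> $ i) = x $ i"
    and mean_c: "\<And>i. prob_space.expectation M (\<lambda>\<omega>. c \<omega> $ i) = x $ i"
    and mom_a: "\<And>i k. k \<le> 4 \<Longrightarrow> prob_space.expectation M (\<lambda>\<omega>. (a \<omega> $ i - x $ i) ^ k) = \<mu> i k"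
    and mom_b: "\<And>i k. k \<le> 4 \<Longrightarrow> prob_space.expectation M (\<lambda>\<omega>. (b \<omega> $ i - x $ i) ^ k) = \<mu> i k"
    and mom_c: "\<And>i k. k \<le> 4 \<Longrightarrow> prob_space.expectation M (\<lambda>\<omega>. (c \<omega> $ i - x $ i) ^ k) = \<mu> i k"
    and gamma_def: "\<gamma> = (MAX i\<in>UNIV. \<bar>x $ i - f y $ i\<bar>)"
    and alpha: "\<And>i. max (\<mu> i 4) (max (\<mu> i 3 * \<gamma>) (\<gamma> ^ 4)) \<le> \<alpha>"
  shows "\<forall>i. prob_space.variance M
            (\<lambda>\<omega>. (a \<omega> $ i - f y $ i)\<^sup>2 - (b \<omega> $ i - c \<omega> $ i)\<^sup>2 / 2) \<le> 14 * \<alpha>"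
proof (intro allI)
  fix i
  interpret prob_space M by (rule assms(1))
  define X where "X = entry_family a b c"
  have Xa: "X (LA,i) = (\<lambda>\<omega>. a \<omega> $ i)" and Xb: "X (LB,i) = (\<lambda>\<omega>. b \<omega> $ i)"
    and Xc: "X (LC,i) = (\<lambda>\<omega>. c \<omega> $ i)" by (auto simp: X_def entry_family_def)
  have rv: "X j \<in> borel_measurable M" for j
    using indep unfolding X_def[symmetric] indep_vars_def by (cases j) auto
  define d where "d = x $ i - f y $ i"
  define m where "m k = \<mu> i k" for k
  define mon where "mon p q r \<omega> = (a \<omega> $ i - x $ i) ^ p * (b \<omega> $ i - x $ i) ^ q * (c \<omega> $ i - x $ i) ^ r"
    for p q r :: nat and \<omega>
  have m0: "m 0 = 1" using mom_a[of 0 i] by (simp add: m_def prob_space)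
  have intA: "integrable M (\<lambda>\<omega>. a \<omega> $ i)"
    using intpow[OF assms(1) rv[of "(LA,i)"] _, of 1 0] int_a[of i] by (simp add: Xa)
  have m1: "m 1 = 0" using mom_a[of 1 i] mean_a[of i] intA by (simp add: m_def prob_space)
  have m1': "m (Suc 0) = 0" using m1 by simp
  have H: "has_bochner_integral M (mon p q r) (m p * m q * m r)" if "p \<le> 4" "q \<le> 4" "r \<le> 4" for p q r
  proof -
    have "has_bochner_integral M (mon p q r) 
      (integral\<^sup>L M (\<lambda>\<omega>. (X (LA,i) \<omega> - x$i) ^ p) * integral\<^sup>L M (\<lambda>\<omega>. (X (LB,i) \<omega> - x$i) ^ q)
       * integral\<^sup>L M (\<lambda>\<omega>. (X (LC,i) \<omega> - x$i) ^ r))"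
      unfolding mon_def[abs_def]
      using M3[OF assms(1) indep[folded X_def], of i "x$i" p q r]
        intpow[OF assms(1) rv[of "(LA,i)"] _ that(1)] intpow[OF assms(1) rv[of "(LB,i)"] _ that(2)]
        intpow[OF assms(1) rv[of "(LC,i)"] _ that(3)] int_a int_b int_c
      by (simp add: Xa Xb Xc)
    then show ?thesis using mom_a[OF that(1)] mom_b[OF that(2)] mom_c[OF that(3)] by (simp add: Xa Xb Xc m_def)
  qed
  define U where "U \<omega> = (a \<omega> $ i - f y $ i)\<^sup>2 - (b \<omega> $ i - c \<omega> $ i)\<^sup>2 / 2" for \<omega>
  have hU0: "has_bochner_integral M (\<lambda>\<omega>. mon 2 0 0 \<omega> + 2 * d * mon 1 0 0 \<omega> + d^2 * mon 0 0 0 \<omega>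
     - 1/2 * mon 0 2 0 \<omega> + mon 0 1 1 \<omega> - 1/2 * mon 0 0 2 \<omega>)
     (m 2 * m 0 * m 0 + 2 * d * (m 1 * m 0 * m 0) + d^2 * (m 0 * m 0 * m 0)
     - 1/2 * (m 0 * m 2 * m 0) + m 0 * m 1 * m 1 - 1/2 * (m 0 * m 0 * m 2))"
    by (intro has_bochner_integral_add has_bochner_integral_diff has_bochner_integral_mult_right H; simp)
  have eU: "(\<lambda>\<omega>. mon 2 0 0 \<omega> + 2 * d * mon 1 0 0 \<omega> + d^2 * mon 0 0 0 \<omega>
     - 1/2 * mon 0 2 0 \<omega> + mon 0 1 1 \<omega> - 1/2 * mon 0 0 2 \<omega>) = U"
    by (rule ext) (simp add: mon_def U_def d_def power2_eq_square field_simps)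
  have EU: "expectation U = d^2"
    using hU0 unfolding eU by (simp add: has_bochner_integral_iff m0 m1 m1')
  define V where "V = 3/2 * m 4 - 1/2 * (m 2)^2 + 4 * d * m 3 + 4 * d^2 * m 2"
  have hV0: "has_bochner_integral M (\<lambda>\<omega>. mon 4 0 0 \<omega> + 4*d*mon 3 0 0 \<omega> + 4*d^2*mon 2 0 0 \<omega>
      - mon 2 2 0 \<omega> + 2*mon 2 1 1 \<omega> - mon 2 0 2 \<omega> - 2*d*mon 1 2 0 \<omega> + 4*d*mon 1 1 1 \<omega>
      - 2*d*mon 1 0 2 \<omega> + 1/4*mon 0 4 0 \<omega> + 1/4*mon 0 0 4 \<omega> + 3/2*mon 0 2 2 \<omega>
      - mon 0 3 1 \<omega> - mon 0 1 3 \<omega>)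
      (m 4 * m 0 * m 0 + 4*d*(m 3 * m 0 * m 0) + 4*d^2*(m 2 * m 0 * m 0)
      - m 2 * m 2 * m 0 + 2*(m 2 * m 1 * m 1) - m 2 * m 0 * m 2 - 2*d*(m 1 * m 2 * m 0) + 4*d*(m 1 * m 1 * m 1)
      - 2*d*(m 1 * m 0 * m 2) + 1/4*(m 0 * m 4 * m 0) + 1/4*(m 0 * m 0 * m 4) + 3/2*(m 0 * m 2 * m 2)
      - m 0 * m 3 * m 1 - m 0 * m 1 * m 3)"
    by (intro has_bochner_integral_add has_bochner_integral_diff has_bochner_integral_mult_right H; simp)
  have eV: "(\<lambda>\<omega>. mon 4 0 0 \<omega> + 4*d*mon 3 0 0 \<omega> + 4*d^2*mon 2 0 0 \<omega>
      - mon 2 2 0 \<omega> + 2*mon 2 1 1 \<omega> - mon 2 0 2 \<omega> - 2*d*mon 1 2 0 \<omega> + 4*d*mon 1 1 1 \<omega>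
      - 2*d*mon 1 0 2 \<omega> + 1/4*mon 0 4 0 \<omega> + 1/4*mon 0 0 4 \<omega> + 3/2*mon 0 2 2 \<omega>
      - mon 0 3 1 \<omega> - mon 0 1 3 \<omega>) = (\<lambda>\<omega>. (U \<omega> - d^2)^2)"
  proof (rule ext)
    fix \<omega>
    have "a \<omega> $ i - f y $ i = (a \<omega> $ i - x $ i) + d" "b \<omega> $ i - c \<omega> $ i = (b \<omega> $ i - x $ i) - (c \<omega> $ i - x $ i)"
      by (auto simp: d_def)
    then show "mon 4 0 0 \<omega> + 4*d*mon 3 0 0 \<omega> + 4*d^2*mon 2 0 0 \<omega>
      - mon 2 2 0 \<omega> + 2*mon 2 1 1 \<omega> - mon 2 0 2 \<omega> - 2*d*mon 1 2 0 \<omega> + 4*d*mon 1 1 1 \<omega>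
      - 2*d*mon 1 0 2 \<omega> + 1/4*mon 0 4 0 \<omega> + 1/4*mon 0 0 4 \<omega> + 3/2*mon 0 2 2 \<omega>
      - mon 0 3 1 \<omega> - mon 0 1 3 \<omega> = (U \<omega> - d^2)^2"
      unfolding mon_def U_def by (simp only: idV)
  qed
  have VarV: "variance U = V"
    using hV0 unfolding eV EU by (simp add: has_bochner_integral_iff m0 m1 m1' V_def power2_eq_square)
  have h1: "0 \<le> m 4 - 4 * d * m 3 + 4 * d^2 * m 2"
  proof -
    have "has_bochner_integral M (\<lambda>\<omega>. mon 4 0 0 \<omega> - 4*d*mon 3 0 0 \<omega> + 4*d^2*mon 2 0 0 \<omega>)
       (m 4 * m 0 * m 0 - 4*d*(m 3 * m 0 * m 0) + 4*d^2*(m 2 * m 0 * m 0))"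
      by (intro has_bochner_integral_add has_bochner_integral_diff has_bochner_integral_mult_right H; simp)
    moreover have "(\<lambda>\<omega>. mon 4 0 0 \<omega> - 4*d*mon 3 0 0 \<omega> + 4*d^2*mon 2 0 0 \<omega>)
       = (\<lambda>\<omega>. (mon 2 0 0 \<omega> - 2 * d * mon 1 0 0 \<omega>)^2)"
      unfolding mon_def by (simp only: id1)
    ultimately have hb: "has_bochner_integral M (\<lambda>\<omega>. (mon 2 0 0 \<omega> - 2 * d * mon 1 0 0 \<omega>)^2) (m 4 * m 0 * m 0 - 4*d*(m 3 * m 0 * m 0) + 4*d^2*(m 2 * m 0 * m 0))" by simp
    have "integral\<^sup>L M (\<lambda>\<omega>. (mon 2 0 0 \<omega> - 2 * d * mon 1 0 0 \<omega>)^2) = (m 4 * m 0 * m 0 - 4*d*(m 3 * m 0 * m 0) + 4*d^2*(m 2 * m 0 * m 0))" using hb by (rule has_bochner_integral_integral_eq)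
    moreover have "0 \<le> integral\<^sup>L M (\<lambda>\<omega>. (mon 2 0 0 \<omega> - 2 * d * mon 1 0 0 \<omega>)^2)" by (intro Bochner_Integration.integral_nonneg) simp
    ultimately show ?thesis using m0 by simp
  qed
  have h2: "0 \<le> m 4 - 2 * d^2 * m 2 + d^4"
  proof -
    have "has_bochner_integral M (\<lambda>\<omega>. mon 4 0 0 \<omega> - 2*d^2*mon 2 0 0 \<omega> + d^4*mon 0 0 0 \<omega>)
       (m 4 * m 0 * m 0 - 2*d^2*(m 2 * m 0 * m 0) + d^4*(m 0 * m 0 * m 0))"
      by (intro has_bochner_integral_add has_bochner_integral_diff has_bochner_integral_mult_right H; simp)
    moreover have "(\<lambda>\<omega>. mon 4 0 0 \<omega> - 2*d^2*mon 2 0 0 \<omega> + d^4*mon 0 0 0 \<omega>)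
       = (\<lambda>\<omega>. (mon 2 0 0 \<omega> - d^2)^2)"
      unfolding mon_def by (simp only: id2)
    ultimately have hb: "has_bochner_integral M (\<lambda>\<omega>. (mon 2 0 0 \<omega> - d^2)^2) (m 4 * m 0 * m 0 - 2*d^2*(m 2 * m 0 * m 0) + d^4*(m 0 * m 0 * m 0))" by simp
    have "integral\<^sup>L M (\<lambda>\<omega>. (mon 2 0 0 \<omega> - d^2)^2) = (m 4 * m 0 * m 0 - 2*d^2*(m 2 * m 0 * m 0) + d^4*(m 0 * m 0 * m 0))" using hb by (rule has_bochner_integral_integral_eq)
    moreover have "0 \<le> integral\<^sup>L M (\<lambda>\<omega>. (mon 2 0 0 \<omega> - d^2)^2)" by (intro Bochner_Integration.integral_nonneg) simp
    ultimately show ?thesis using m0 by simp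
  qed
  have dg: "\<bar>d\<bar> \<le> \<gamma>" unfolding gamma_def d_def by (rule Max_ge) auto
  have d4: "d^4 \<le> \<gamma>^4"
  proof -
    have "\<bar>d\<bar>^4 \<le> \<gamma>^4" by (rule power_mono[OF dg]) simp
    then show ?thesis by (simp add: power_even_abs_numeral)
  qed
  have al: "m 4 \<le> \<alpha>" "\<gamma>^4 \<le> \<alpha>" using alpha[of i] by (auto simp: m_def)
  have "V \<le> 14 * \<alpha>"
  proof -
    have "0 \<le> (m 2)^2" by simp
    moreover have "0 \<le> d^4" by (simp add: zero_le_even_power)
    ultimately show ?thesis unfolding V_def using h1 h2 d4 al by linarith
  qed
  then show "variance (\<lambda>\<omega>. (a \<omega> $ i - f y $ i)\<^sup>2 - (b \<omega> $ i - c \<omega> $ i)\<^sup>2 / 2) \<le> 14 * \<alpha>"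
    using VarV unfolding U_def[abs_def] by simp
qed

end
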